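(* Assume $N>1$. Then the operator $L$ satisfies the trace condition: for any $\zeta$ in the domain of $L^*$ such that the eigenvalues of the symmetric matrix $-L^*\zeta(x)$ are bounded above by a constant $k$ for a.e. $x\in\Omega$, the eigenvalues of $L^*\zeta(x)$ are bounded above for a.e. $x\in\Omega$ by a constant depending only on $k$ (and not on $\zeta$ or $x$).
   Context: Fix integers $N\ge1$, $p\ge1$, $n=pN^2$, $\Omega=\mathbb T^{N\times p}$ with coordinates $x_{jl}$. Indices of $\mathbb R^n$ are triples $(i,j,k)$, $i,j\in\{1,\dots,N\}$, $k\in\{1,\dots,p\}$; elements of the space $\mathbb R^{n\times n}_s$ of symmetric matrices are arrays $A_{ijk,hqr}$, with Frobenius inner product. The linear map $\mathfrak U:\mathbb R^{n\times n}_s\to\mathbb R^N$ is $(\mathfrak U A)_i=\frac12\sum_{l=1}^p\big[A_{iil,iil}+\sum_{j\ne i}(A_{jjl,ijl}+A_{ijl,jjl})\big]$, with adjoint $\mathfrak U^*:\mathbb R^N\to\mathbb R^{n\times n}_s$. For $w:\Omega\to\mathbb R^{n\times n}_s$, $Lw=-\nabla(\mathfrak U w)$ ($\mathbb R^n$-valued with components $-\partial_{x_{jk}}(\mathfrak Uw)_i$), and $L^*=\mathfrak U^*\operatorname{div}$ is its $L^2(\Omega)$-adjoint, acting on $\mathbb R^n$-valued functions $\zeta$. *)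

theory Defs
  imports "HOL-Analysis.Analysis"
begin

text \<open>Index set of R^n: triples (i,j,k) with i,j :: 'N (size N), k :: 'p (size p).
  Coordinates of Omega = T^(N x p): pairs (j,l) :: 'N \<times> 'p.
  The torus is represented by the unit cube with Lebesgue measure; test functions
  are 1-periodic in every coordinate.\<close>

definition symmetric_mat :: "real^'i^'i \<Rightarrow> bool" where
  "symmetric_mat A \<longleftrightarrow> transpose A = A"

definition Uop :: "real^('N::finite \<times> 'N \<times> 'p::finite)^('N \<times> 'N \<times> 'p) \<Rightarrow> real^'N" where
  "Uop A = (\<chi> i. (1/2) * (\<Sum>l\<in>UNIV. A$(i,i,l)$(i,i,l)
       + (\<Sum>j\<in>UNIV - {i}. A$(j,j,l)$(i,j,l) + A$(i,j,l)$(j,j,l))))"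

definition Uadj :: "real^'N \<Rightarrow> real^('N::finite \<times> 'N \<times> 'p::finite)^('N \<times> 'N \<times> 'p)" where
  "Uadj v = (THE B. symmetric_mat B \<and> (\<forall>A. symmetric_mat A \<longrightarrow> Uop A \<bullet> v = A \<bullet> B))"

definition partial_deriv :: "('a::real_normed_vector \<Rightarrow> 'b::real_normed_vector) \<Rightarrow> 'a \<Rightarrow> 'a \<Rightarrow> 'b" where
  "partial_deriv f e x = vector_derivative (\<lambda>t. f (x + t *\<^sub>R e)) (at 0)"

definition Omega :: "(real^('N::finite \<times> 'p::finite)) set" where
  "Omega = cbox 0 One"

definition test_fun :: "(real^('N \<times> 'p) \<Rightarrow> real^('N::finite \<times> 'N \<times> 'p::finite)^('N \<times> 'N \<times> 'p)) \<Rightarrow> bool" where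
  "test_fun w \<longleftrightarrow> (\<forall>x. symmetric_mat (w x))
     \<and> (\<forall>x z. (\<forall>c. z$c \<in> \<int>) \<longrightarrow> w (x + z) = w x)
     \<and> (\<forall>c. (\<forall>x. (\<lambda>t. w (x + t *\<^sub>R axis c 1)) differentiable (at 0))
            \<and> continuous_on UNIV (partial_deriv w (axis c 1)))"

definition Lop :: "(real^('N \<times> 'p) \<Rightarrow> real^('N::finite \<times> 'N \<times> 'p::finite)^('N \<times> 'N \<times> 'p))
     \<Rightarrow> real^('N \<times> 'p) \<Rightarrow> real^('N \<times> 'N \<times> 'p)" where
  "Lop w x = (\<chi> ijk. case ijk of (i,j,k) \<Rightarrow>
       - partial_deriv (\<lambda>y. Uop (w y) $ i) (axis (j,k) 1) x)"

definition L2_on :: "'a::euclidean_space set \<Rightarrow> ('a \<Rightarrow> 'b::euclidean_space) \<Rightarrow> bool" where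
  "L2_on S f \<longleftrightarrow> f \<in> borel_measurable (lebesgue_on S)
      \<and> integrable (lebesgue_on S) (\<lambda>x. (norm (f x))\<^sup>2)"

text \<open>is_Ladj zeta f: zeta lies in the domain of the L^2(Omega)-adjoint L^* of L and
  f is (a representative of) L^* zeta.\<close>
definition is_Ladj :: "(real^('N::finite \<times> 'p::finite) \<Rightarrow> real^('N \<times> 'N \<times> 'p))
     \<Rightarrow> (real^('N \<times> 'p) \<Rightarrow> real^('N::finite \<times> 'N \<times> 'p::finite)^('N \<times> 'N \<times> 'p)) \<Rightarrow> bool" where
  "is_Ladj \<zeta> f \<longleftrightarrow> L2_on Omega \<zeta> \<and> L2_on Omega f
     \<and> (AE x in lebesgue_on Omega. symmetric_mat (f x))
     \<and> (\<forall>w. test_fun w \<longrightarrow>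
          (LINT x|lebesgue_on Omega. Lop w x \<bullet> \<zeta> x) = (LINT x|lebesgue_on Omega. w x \<bullet> f x))"

definition eigenvalues_le :: "real^'i^'i \<Rightarrow> real \<Rightarrow> bool" where
  "eigenvalues_le M k \<longleftrightarrow> (\<forall>c v. v \<noteq> 0 \<and> M *v v = c *\<^sub>R v \<longrightarrow> c \<le> k)"

end

theory Submission
  imports Defs "HOL-Real_Asymp.Real_Asymp"
begin


lemma box_zero_AE:
  fixes G :: "'a::euclidean_space \<Rightarrow> real"
  assumes intG: "integrable lebesgue G"
    and boxes: "\<And>a b. (LINT x|lebesgue. indicator (box a b) x * G x) = 0"
  shows "AE x in lebesgue. G x = 0"
proof -
  have Gm: "G \<in> borel_measurable (completion lborel)" using intG by auto
  obtain G' where G'm: "G' \<in> borel_measurable lborel" and eq: "AE x in lborel. G x = G' x"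
    using completion_ex_borel_measurable_real[OF Gm] by blast
  have eqc: "AE x in lebesgue. G x = G' x" using AE_completion[OF eq] .
  have intc: "integrable lebesgue G'"
    using integrable_cong_AE[OF Gm measurable_completion[OF G'm] eqc] intG by simp
  have int': "integrable lborel G'" using intc integrable_completion[OF G'm] by simp
  define P where "P A \<longleftrightarrow> (LINT x|lborel. indicator A x * G' x) = 0" for A
  have Pbox: "P (box a b)" for a b
  proof -
    have m: "(\<lambda>x. indicator (box a b) x * G' x) \<in> borel_measurable lborel"
      using G'm by measurable
    have "(LINT x|lborel. indicator (box a b) x * G' x) = (LINT x|lebesgue. indicator (box a b) x * G' x)"
      using integral_completion[OF m] by simp
    also have "\<dots> = (LINT x|lebesgue. indicator (box a b) x * G x)"
    proof (rule integral_cong_AE)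
      show "(\<lambda>x. indicator (box a b) x * G' x) \<in> borel_measurable lebesgue"
        by (rule measurable_completion[OF m])
      show "(\<lambda>x. indicator (box a b) x * G x) \<in> borel_measurable lebesgue"
        by (intro borel_measurable_times[OF _ Gm] borel_measurable_indicator) simp
      show "AE x in lebesgue. indicator (box a b) x * G' x = indicator (box a b) x * G x"
        using eqc by eventually_elim simp
    qed
    finally show ?thesis unfolding P_def using boxes by simp
  qed
  have PUNIV: "P UNIV"
  proof -
    define s where "s n x = indicator (box (-(real n) *\<^sub>R One) (real n *\<^sub>R One)) x * G' x" for n x
    have "(\<lambda>n. integral\<^sup>L lborel (s n)) \<longlonglongrightarrow> integral\<^sup>L lborel G'"
    proof (rule integral_dominated_convergence[where w="\<lambda>x. norm (G' x)"])
      show "G' \<in> borel_measurable lborel" by fact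
      show "s i \<in> borel_measurable lborel" for i unfolding s_def using G'm by measurable
      show "integrable lborel (\<lambda>x. norm (G' x))" using int' by simp
      show "AE x in lborel. norm (s i x) \<le> norm (G' x)" for i
        unfolding s_def by (auto simp: indicator_def)
      show "AE x in lborel. (\<lambda>i. s i x) \<longlonglongrightarrow> G' x"
      proof (intro AE_I2 tendsto_eventually)
        fix x :: 'a
        obtain m :: nat where m: "norm x < real m" using reals_Archimedean2 by blast
        show "\<forall>\<^sub>F i in sequentially. s i x = G' x"
        proof (rule eventually_sequentiallyI[of m])
          fix i assume "m \<le> i"
          then have "norm x < real i" using m by linarith
          then have "x \<in> box (-(real i) *\<^sub>R One) (real i *\<^sub>R One)"
            unfolding mem_box
          proof (intro ballI)
            fix b :: 'a assume b: "b \<in> Basis"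
            have "\<bar>x \<bullet> b\<bar> < real i" using Basis_le_norm[OF b, of x] \<open>norm x < real i\<close> by linarith
            then show "- real i *\<^sub>R One \<bullet> b < x \<bullet> b \<and> x \<bullet> b < real i *\<^sub>R One \<bullet> b"
              using b by (auto simp: abs_less_iff)
          qed
          then show "s i x = G' x" unfolding s_def by simp
        qed
      qed
    qed
    moreover have "integral\<^sup>L lborel (s n) = 0" for n using Pbox unfolding P_def s_def by simp
    ultimately have "(\<lambda>n. 0::real) \<longlonglongrightarrow> integral\<^sup>L lborel G'" by simp
    then have "integral\<^sup>L lborel G' = 0" using LIMSEQ_unique[OF tendsto_const] by metis
    then show ?thesis unfolding P_def by simp
  qed
  have Pall: "P A" if "A \<in> sets borel" for A
  proof -
    have sb: "sets borel = sigma_sets UNIV (range (\<lambda>(a, b). box a b :: 'a set))"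
      by (subst borel_eq_box) (simp add: sets_measure_of)
    have Ain: "A \<in> sigma_sets UNIV (range (\<lambda>(a, b). box a b :: 'a set))" using that sb by simp
    have IS: "Int_stable (range (\<lambda>(a, b). box a b :: 'a set))"
      unfolding Int_stable_def by (auto simp: box_Int_box)
    show ?thesis
    proof (rule sigma_sets_induct_disjoint[OF IS _ Ain, where P=P])
      show "range (\<lambda>(a, b). box a b :: 'a set) \<subseteq> Pow UNIV" by auto
    next
      fix A assume "A \<in> range (\<lambda>(a, b). box a b :: 'a set)"
      then show "P A" using Pbox by auto
    next
      show "P {}" unfolding P_def by simp
    next
      fix A assume A1: "A \<in> sigma_sets UNIV (range (\<lambda>(a, b). box a b :: 'a set))" and A2: "P A"
      have Am: "A \<in> sets borel" using A1 sb by simp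
      have i1: "integrable lborel (\<lambda>x. indicator A x * G' x)"
        using Am int' using integrable_mult_indicator[of _ lborel G'] by simp
      have "(LINT x|lborel. indicator (UNIV - A) x * G' x) = (LINT x|lborel. G' x - indicator A x * G' x)"
        by (intro Bochner_Integration.integral_cong) (auto simp: indicator_def)
      also have "\<dots> = (LINT x|lborel. G' x) - (LINT x|lborel. indicator A x * G' x)"
        using int' i1 by simp
      finally show "P (UNIV - A)" using A2 PUNIV unfolding P_def by simp
    next
      fix A :: "nat \<Rightarrow> 'a set"
      assume U1: "disjoint_family A" and U2: "range A \<subseteq> sigma_sets UNIV (range (\<lambda>(a, b). box a b :: 'a set))"
        and U3: "\<And>i. P (A i)"
      have Am: "A i \<in> sets borel" for i using U2 sb by auto
      have "set_integrable lborel (\<Union>i. A i) G'"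
        unfolding set_integrable_def using Am int'
        using integrable_mult_indicator[of _ lborel G'] by simp
      then have "(LINT x:(\<Union>i. A i)|lborel. G' x) = (\<Sum>i. (LINT x:(A i)|lborel. G' x))"
        using U1 Am by (intro lebesgue_integral_countable_add) (auto simp: disjoint_family_on_def)
      also have "\<dots> = 0" using U3 unfolding P_def set_lebesgue_integral_def by simp
      finally show "P (\<Union>i. A i)" unfolding P_def set_lebesgue_integral_def by simp
    qed
  qed
  have "AE x in lborel. G' x = 0"
    using int' by (rule sigma_finite_measure.density_zero[OF sigma_finite_lborel]) (use Pall in \<open>auto simp: P_def set_lebesgue_integral_def\<close>)
  then have "AE x in lebesgue. G' x = 0" by (rule AE_completion)
  with eqc show ?thesis by eventually_elim simp
qed



definition qf :: "nat \<Rightarrow> real \<Rightarrow> real" where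
  "qf n s = exp (-(real n) * exp (-(real n) * s))"
definition qf' :: "nat \<Rightarrow> real \<Rightarrow> real" where
  "qf' n s = qf n s * ((real n)^2 * exp (-(real n) * s))"

lemma qf_deriv: "(qf n has_real_derivative qf' n s) (at s)"
  unfolding qf_def qf'_def
  by (rule derivative_eq_intros refl | simp add: power2_eq_square)+

lemma qf'_cont: "continuous_on UNIV (qf' n)"
  unfolding qf_def qf'_def by (intro continuous_intros)

lemma qf_cont: "continuous_on UNIV (qf n)"
  unfolding qf_def by (intro continuous_intros)

lemma qf_bounds: "0 \<le> qf n s" "qf n s \<le> 1"
  unfolding qf_def by (auto simp: mult_nonneg_nonneg)

lemma qf_lim: "(\<lambda>n. qf n s) \<longlonglongrightarrow> (if s > 0 then 1 else 0)"
proof -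
  consider "s > 0" | "s = 0" | "s < 0" by linarith
  then show ?thesis
  proof cases
    case 1 then show ?thesis unfolding qf_def by simp real_asymp
  next
    case 2 then show ?thesis unfolding qf_def by simp real_asymp
  next
    case 3 then show ?thesis unfolding qf_def by simp real_asymp
  qed
qed

lemma cos_arc:
  fixes u d :: real
  assumes d0: "0 < d" and d1: "d < 1/2" and ud: "\<bar>u\<bar> \<le> 1 - d"
  shows "cos (2 * pi * u) > cos (2 * pi * d) \<longleftrightarrow> \<bar>u\<bar> < d"
proof -
  define v where "v = \<bar>u\<bar>"
  have cv: "cos (2 * pi * u) = cos (2 * pi * v)"
  proof (cases "u \<ge> 0")
    case True then show ?thesis unfolding v_def by simp
  next
    case False
    then have "v = - u" unfolding v_def by simp
    then have "2 * pi * v = - (2 * pi * u)" by simp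
    then show ?thesis by (simp only: cos_minus)
  qed
  have v0: "0 \<le> v" unfolding v_def by simp
  have v1: "v \<le> 1 - d" unfolding v_def using ud .
  show ?thesis
  proof (cases "v \<le> 1/2")
    case True
    have a1: "2 * pi * v \<le> pi" using True pi_gt_zero by (simp add: field_simps)
    have a2: "2 * pi * d \<le> pi" using d1 pi_gt_zero by (simp add: field_simps)
    have "cos (2 * pi * d) < cos (2 * pi * v) \<longleftrightarrow> 2 * pi * v < 2 * pi * d"
      by (rule cos_mono_less_eq) (use a1 a2 v0 d0 pi_gt_zero in simp_all)
    also have "\<dots> \<longleftrightarrow> v < d" using pi_gt_zero by simp
    finally show ?thesis using cv unfolding v_def by simp
  next
    case False
    have "cos (2 * pi * v) = cos (-(2 * pi * v))" by (simp only: cos_minus)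
    also have "\<dots> = cos (-(2 * pi * v) + 2 * pi)" by (simp only: cos_periodic)
    also have "-(2 * pi * v) + 2 * pi = 2 * pi * (1 - v)" by (simp add: algebra_simps)
    finally have c1: "cos (2 * pi * v) = cos (2 * pi * (1 - v))" .
    have b1: "2 * pi * (1 - v) \<le> pi" using False pi_gt_zero by (simp add: field_simps)
    have b2: "2 * pi * d \<le> pi" using d1 pi_gt_zero by (simp add: field_simps)
    have b3: "0 \<le> 2 * pi * (1 - v)" using v1 d0 pi_gt_zero by simp
    have b4: "2 * pi * d \<le> 2 * pi * (1 - v)" using v1 pi_gt_zero by simp
    have "cos (2 * pi * (1 - v)) \<le> cos (2 * pi * d)"
      using cos_mono_le_eq[of "2 * pi * (1 - v)" "2 * pi * d"] b1 b2 b3 b4 d0 pi_gt_zero by simp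
    then have "\<not> cos (2 * pi * u) > cos (2 * pi * d)" using cv c1 by simp
    moreover have "\<not> \<bar>u\<bar> < d" using False d1 unfolding v_def by simp
    ultimately show ?thesis by simp
  qed
qed

definition hk :: "real \<Rightarrow> real \<Rightarrow> nat \<Rightarrow> real \<Rightarrow> real" where
  "hk p q n t = (if q \<le> p then 0 else if p = 0 \<and> q = 1 then 1
     else qf n (cos (2 * pi * (t - (p + q) / 2)) - cos (2 * pi * ((q - p) / 2))))"

definition hk' :: "real \<Rightarrow> real \<Rightarrow> nat \<Rightarrow> real \<Rightarrow> real" where
  "hk' p q n t = (if q \<le> p then 0 else if p = 0 \<and> q = 1 then 0
     else qf' n (cos (2 * pi * (t - (p + q) / 2)) - cos (2 * pi * ((q - p) / 2)))
        * (- sin (2 * pi * (t - (p + q) / 2)) * (2 * pi)))"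

definition hc :: "real \<Rightarrow> real \<Rightarrow> nat \<Rightarrow> real \<Rightarrow> real" where
  "hc a b = hk (max a 0) (min b 1)"

definition hc' :: "real \<Rightarrow> real \<Rightarrow> nat \<Rightarrow> real \<Rightarrow> real" where
  "hc' a b = hk' (max a 0) (min b 1)"

lemma hk_deriv: "(hk p q n has_real_derivative hk' p q n t) (at t)"
proof -
  have D: "((\<lambda>t. qf n (cos (2 * pi * (t - (p + q) / 2)) - cos (2 * pi * ((q - p) / 2))))
     has_real_derivative qf' n (cos (2 * pi * (t - (p + q) / 2)) - cos (2 * pi * ((q - p) / 2)))
        * (- sin (2 * pi * (t - (p + q) / 2)) * (2 * pi))) (at t)"
    by (rule DERIV_chain2[OF qf_deriv]) (rule derivative_eq_intros refl | simp)+
  consider "q \<le> p" | "\<not> q \<le> p" "p = 0 \<and> q = 1" | "\<not> q \<le> p" "\<not> (p = 0 \<and> q = 1)" by blast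
  then show ?thesis
  proof cases
    case 1 then show ?thesis unfolding hk_def[abs_def] hk'_def by simp
  next
    case 2 then show ?thesis unfolding hk_def[abs_def] hk'_def by simp
  next
    case 3
    have E1: "hk p q n = (\<lambda>t. qf n (cos (2 * pi * (t - (p + q) / 2)) - cos (2 * pi * ((q - p) / 2))))"
      using 3 by (intro ext) (simp only: hk_def if_not_P[OF 3(1)] if_not_P[OF 3(2)] if_False)
    have E2: "hk' p q n t = qf' n (cos (2 * pi * (t - (p + q) / 2)) - cos (2 * pi * ((q - p) / 2)))
        * (- sin (2 * pi * (t - (p + q) / 2)) * (2 * pi))"
      using 3 by (simp only: hk'_def if_not_P[OF 3(1)] if_not_P[OF 3(2)] if_False)
    show ?thesis unfolding E1 E2 by (rule D)
  qed
qed

lemma hc_deriv: "(hc a b n has_real_derivative hc' a b n t) (at t)"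
  unfolding hc_def hc'_def by (rule hk_deriv)

lemma hk'_cont: "continuous_on UNIV (hk' p q n)"
proof -
  have C: "continuous_on UNIV (\<lambda>t. qf' n (cos (2 * pi * (t - (p + q) / 2)) - cos (2 * pi * ((q - p) / 2)))
        * (- sin (2 * pi * (t - (p + q) / 2)) * (2 * pi)))"
    by (auto intro!: continuous_intros continuous_on_compose2[OF qf'_cont])
  consider "q \<le> p" | "\<not> q \<le> p" "p = 0 \<and> q = 1" | "\<not> q \<le> p" "\<not> (p = 0 \<and> q = 1)" by blast
  then show ?thesis
  proof cases
    case 1 then show ?thesis unfolding hk'_def[abs_def] by simp
  next
    case 2 then show ?thesis unfolding hk'_def[abs_def] by simp
  next
    case 3
    have E2: "hk' p q n = (\<lambda>t. qf' n (cos (2 * pi * (t - (p + q) / 2)) - cos (2 * pi * ((q - p) / 2)))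
        * (- sin (2 * pi * (t - (p + q) / 2)) * (2 * pi)))"
      using 3 by (intro ext) (simp only: hk'_def if_not_P[OF 3(1)] if_not_P[OF 3(2)] if_False)
    show ?thesis unfolding E2 by (rule C)
  qed
qed

lemma hc'_cont: "continuous_on UNIV (hc' a b n)"
  unfolding hc'_def by (rule hk'_cont)

lemma hc_cont: "continuous_on UNIV (hc a b n)"
  using hc_deriv by (rule has_real_derivative_imp_continuous_on)

lemma hc_bounds: "0 \<le> hc a b n t" "hc a b n t \<le> 1"
  unfolding hc_def hk_def using qf_bounds by auto

lemma hc_periodic:
  assumes "z \<in> \<int>" shows "hc a b n (t + z) = hc a b n t"
proof -
  obtain m where z: "z = of_int m" using assms Ints_cases by blast
  have "cos (2 * pi * (t + z - c)) = cos (2 * pi * (t - c))" for c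
  proof -
    have "2 * pi * (t + z - c) = 2 * pi * (t - c) + (2 * pi) * real_of_int m" by (simp add: z algebra_simps)
    then show ?thesis by (simp add: cos_add)
  qed
  then show ?thesis unfolding hc_def hk_def by simp
qed

lemma hc_lim:
  assumes t: "0 < t" "t < 1"
  shows "(\<lambda>n. hc a b n t) \<longlonglongrightarrow> (if a < t \<and> t < b then 1 else 0)"
proof -
  define \<alpha> where "\<alpha> = max a 0"
  define \<beta> where "\<beta> = min b 1"
  have iff: "(a < t \<and> t < b) \<longleftrightarrow> (\<alpha> < t \<and> t < \<beta>)" unfolding \<alpha>_def \<beta>_def using t by auto
  consider "\<beta> \<le> \<alpha>" | "\<not> \<beta> \<le> \<alpha>" "\<alpha> = 0 \<and> \<beta> = 1" | "\<not> \<beta> \<le> \<alpha>" "\<not> (\<alpha> = 0 \<and> \<beta> = 1)" by blast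
  then show ?thesis
  proof cases
    case 1
    then have "hc a b n t = 0" for n unfolding hc_def hk_def \<alpha>_def \<beta>_def by simp
    moreover have "(if a < t \<and> t < b then 1 else 0::real) = 0" using iff 1 by auto
    ultimately show ?thesis by (simp only:) (rule tendsto_const)
  next
    case 2
    then have "hc a b n t = 1" for n unfolding hc_def hk_def \<alpha>_def \<beta>_def by simp
    moreover have "a < t \<and> t < b" using iff 2 t by auto
    ultimately show ?thesis by simp
  next
    case 3
    define d where "d = (\<beta> - \<alpha>) / 2"
    define u where "u = t - (\<alpha> + \<beta>) / 2"
    have a0: "0 \<le> \<alpha>" and b1: "\<beta> \<le> 1" unfolding \<alpha>_def \<beta>_def by auto
    have d0: "0 < d" using 3 unfolding d_def by simp
    have d1: "d < 1/2" using 3 a0 b1 unfolding d_def by auto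
    have u1: "u \<le> 1 - d" using a0 b1 t unfolding u_def d_def by (simp add: field_simps)
    have u2: "- u \<le> 1 - d" using a0 b1 t unfolding u_def d_def by (simp add: field_simps)
    have ud: "\<bar>u\<bar> \<le> 1 - d" using u1 u2 by simp
    have eq: "hc a b n t = qf n (cos (2 * pi * u) - cos (2 * pi * d))" for n
      unfolding hc_def hk_def \<alpha>_def[symmetric] \<beta>_def[symmetric] u_def d_def
      by (simp only: if_not_P[OF 3(1)] if_not_P[OF 3(2)] if_False)
    have "(\<lambda>n. qf n (cos (2 * pi * u) - cos (2 * pi * d))) \<longlonglongrightarrow>
        (if cos (2 * pi * u) - cos (2 * pi * d) > 0 then 1 else 0)" by (rule qf_lim)
    moreover have "(cos (2 * pi * u) - cos (2 * pi * d) > 0) \<longleftrightarrow> (a < t \<and> t < b)"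
    proof -
      have "(cos (2 * pi * u) - cos (2 * pi * d) > 0) \<longleftrightarrow> \<bar>u\<bar> < d"
        using cos_arc[OF d0 d1 ud] by simp
      also have "\<dots> \<longleftrightarrow> (\<alpha> < t \<and> t < \<beta>)" unfolding u_def d_def abs_less_iff by (auto simp: field_simps)
      finally show ?thesis using iff by simp
    qed
    ultimately show ?thesis using eq by simp
  qed
qed



definition phi :: "real^'d::finite \<Rightarrow> real^'d \<Rightarrow> nat \<Rightarrow> real^'d \<Rightarrow> real" where
  "phi a b n x = (\<Prod>c\<in>UNIV. hc (a$c) (b$c) n (x$c))"

lemma phi_bounds: "0 \<le> phi a b n x" "phi a b n x \<le> 1"
  unfolding phi_def using hc_bounds by (auto intro: prod_nonneg prod_le_1)

lemma phi_lim:
  fixes x :: "real^'d::finite"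
  assumes x: "x \<in> box 0 One"
  shows "(\<lambda>n. phi a b n x) \<longlonglongrightarrow> indicator (box a b) x"
proof -
  have One1: "(One :: real^'d) $ c = 1" for c by (metis one_index Cart_1)
  have h: "(0::real^'d)$c < x$c \<and> x$c < (One::real^'d)$c" for c using x unfolding mem_box_cart by blast
  have t: "0 < x$c" "x$c < 1" for c using h[of c] One1[of c] by (metis zero_index)+
  have "(\<lambda>n. phi a b n x) \<longlonglongrightarrow> (\<Prod>c\<in>UNIV. (if a$c < x$c \<and> x$c < b$c then 1 else 0))"
    unfolding phi_def by (intro tendsto_prod hc_lim t)
  moreover have "(\<Prod>c\<in>UNIV. (if a$c < x$c \<and> x$c < b$c then 1 else 0)) = (indicator (box a b) x :: real)"
  proof (cases "x \<in> box a b")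
    case True then show ?thesis by (auto simp: mem_box_cart)
  next
    case False
    then obtain c where "\<not> (a$c < x$c \<and> x$c < b$c)" by (auto simp: mem_box_cart)
    then have "(\<Prod>c\<in>UNIV. (if a$c < x$c \<and> x$c < b$c then 1 else 0)) = (0::real)"
      by (intro prod_zero) auto
    then show ?thesis using False by simp
  qed
  ultimately show ?thesis by simp
qed

lemma phi_cont: "continuous_on UNIV (phi a b n)"
  unfolding phi_def[abs_def]
  by (intro continuous_on_prod continuous_on_compose2[OF hc_cont] continuous_on_component continuous_on_id) auto

lemma phi_periodic:
  assumes "\<forall>c. z$c \<in> \<int>" shows "phi a b n (x + z) = phi a b n x"
  unfolding phi_def using assms hc_periodic by simp

lemma phi_line:
  "phi a b n (x + t *\<^sub>R axis c 1) = hc (a$c) (b$c) n (x$c + t) * (\<Prod>c'\<in>UNIV - {c}. hc (a$c') (b$c') n (x$c'))"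
proof -
  have "phi a b n (x + t *\<^sub>R axis c 1) = hc (a$c) (b$c) n ((x + t *\<^sub>R axis c 1)$c) *
     (\<Prod>c'\<in>UNIV - {c}. hc (a$c') (b$c') n ((x + t *\<^sub>R axis c 1)$c'))"
    unfolding phi_def by (rule prod.remove) auto
  also have "(\<Prod>c'\<in>UNIV - {c}. hc (a$c') (b$c') n ((x + t *\<^sub>R axis c 1)$c')) =
      (\<Prod>c'\<in>UNIV - {c}. hc (a$c') (b$c') n (x$c'))"
    by (intro prod.cong) (auto simp: axis_def)
  finally show ?thesis by (simp add: axis_def)
qed

definition phid :: "real^'d::finite \<Rightarrow> real^'d \<Rightarrow> nat \<Rightarrow> 'd \<Rightarrow> real^'d \<Rightarrow> real" where
  "phid a b n c x = hc' (a$c) (b$c) n (x$c) * (\<Prod>c'\<in>UNIV - {c}. hc (a$c') (b$c') n (x$c'))"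

lemma phid_cont: "continuous_on UNIV (phid a b n c)"
  unfolding phid_def[abs_def]
  by (intro continuous_intros continuous_on_compose2[OF hc_cont] continuous_on_compose2[OF hc'_cont] continuous_on_component continuous_on_id) auto

lemma phi_vd:
  fixes A :: "'v::real_normed_vector"
  shows "((\<lambda>t. phi a b n (x + t *\<^sub>R axis c 1) *\<^sub>R A) has_vector_derivative (phid a b n c x *\<^sub>R A)) (at 0)"
proof -
  have "((\<lambda>t. hc (a$c) (b$c) n (x$c + t)) has_real_derivative hc' (a$c) (b$c) n (x$c + 0)) (at 0)"
    using hc_deriv[of "a$c" "b$c" n "x$c + 0"] DERIV_shift[of "hc (a$c) (b$c) n" _ 0 "x$c"]
    by (simp add: add.commute)
  then have "((\<lambda>t. hc (a$c) (b$c) n (x$c + t) * (\<Prod>c'\<in>UNIV - {c}. hc (a$c') (b$c') n (x$c')))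
      has_real_derivative phid a b n c x) (at 0)"
    unfolding phid_def by (auto intro: DERIV_cmult_right)
  then have "((\<lambda>t. phi a b n (x + t *\<^sub>R axis c 1)) has_real_derivative phid a b n c x) (at 0)"
    by (simp add: phi_line)
  then show ?thesis
    using has_vector_derivative_scaleR[OF _ has_vector_derivative_const[of A]] by force
qed



lemma Uop_scale: "Uop (c *\<^sub>R A) = c *\<^sub>R Uop A"
  unfolding Uop_def by (simp add: vec_eq_iff sum_distrib_left algebra_simps)

lemma test_phi:
  fixes A :: "real^('N::finite \<times> 'N \<times> 'p::finite)^('N \<times> 'N \<times> 'p)"
  assumes "symmetric_mat A"
  shows "test_fun (\<lambda>x::real^('N \<times> 'p). phi a b n x *\<^sub>R A)"
  unfolding test_fun_def
proof (intro conjI allI impI)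
  fix x :: "real^('N \<times> 'p)"
  show "symmetric_mat (phi a b n x *\<^sub>R A)"
    using assms unfolding symmetric_mat_def by (simp add: transpose_scalar)
next
  fix x z :: "real^('N \<times> 'p)"
  assume "\<forall>c. z $ c \<in> \<int>"
  then show "phi a b n (x + z) *\<^sub>R A = phi a b n x *\<^sub>R A" using phi_periodic by metis
next
  fix c :: "'N \<times> 'p" and x :: "real^('N \<times> 'p)"
  show "(\<lambda>t. phi a b n (x + t *\<^sub>R axis c 1) *\<^sub>R A) differentiable at 0"
    using phi_vd by (blast intro: differentiableI_vector)
next
  fix c :: "'N \<times> 'p"
  have "partial_deriv (\<lambda>x. phi a b n x *\<^sub>R A) (axis c 1) = (\<lambda>x. phid a b n c x *\<^sub>R A)"
    unfolding partial_deriv_def by (intro ext vector_derivative_at phi_vd)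
  moreover have "continuous_on UNIV (\<lambda>x. phid a b n c x *\<^sub>R A)"
    by (intro continuous_intros phid_cont[THEN continuous_on_subset]) auto
  ultimately show "continuous_on UNIV (partial_deriv (\<lambda>x. phi a b n x *\<^sub>R A) (axis c 1))" by simp
qed

lemma Lop_zero:
  fixes A :: "real^('N::finite \<times> 'N \<times> 'p::finite)^('N \<times> 'N \<times> 'p)"
  assumes "Uop A = 0"
  shows "Lop (\<lambda>x::real^('N \<times> 'p). h x *\<^sub>R A) x = 0"
  unfolding Lop_def partial_deriv_def using assms by (simp add: Uop_scale vec_eq_iff)

lemma orth_AE:
  fixes A :: "real^('N::finite \<times> 'N \<times> 'p::finite)^('N \<times> 'N \<times> 'p)"
    and \<zeta> :: "real^('N \<times> 'p) \<Rightarrow> real^('N \<times> 'N \<times> 'p)"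
  assumes L: "is_Ladj \<zeta> f" and As: "symmetric_mat A" and AU: "Uop A = 0"
  shows "AE x in lebesgue_on Omega. A \<bullet> f x = 0"
proof -
  define g where "g x = A \<bullet> f x" for x
  have Om: "(Omega :: (real^('N \<times> 'p)) set) \<in> sets lebesgue" unfolding Omega_def by simp
  have Om': "(Omega :: (real^('N \<times> 'p)) set) \<inter> space lebesgue \<in> sets lebesgue" using Om by simp
  have fm: "f \<in> borel_measurable (lebesgue_on Omega)"
    and f2: "integrable (lebesgue_on Omega) (\<lambda>x. (norm (f x))\<^sup>2)"
    using L unfolding is_Ladj_def L2_on_def by auto
  have gm: "g \<in> borel_measurable (lebesgue_on Omega)" unfolding g_def using fm by measurable
  have fin: "finite_measure (lebesgue_on (Omega :: (real^('N \<times> 'p)) set))"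
    unfolding Omega_def by (intro finite_measure_lebesgue_on lmeasurable_cbox)
  have intg: "integrable (lebesgue_on Omega) g"
  proof (rule Bochner_Integration.integrable_bound)
    show "integrable (lebesgue_on Omega) (\<lambda>x. norm A * (norm (f x))\<^sup>2 + norm A)"
      using f2 finite_measure.integrable_const[OF fin]
      by (intro Bochner_Integration.integrable_add integrable_mult_right) auto
    show "g \<in> borel_measurable (lebesgue_on Omega)" by fact
    show "AE x in lebesgue_on Omega. norm (g x) \<le> norm (norm A * (norm (f x))\<^sup>2 + norm A)"
    proof (intro AE_I2)
      fix x
      have "norm (g x) \<le> norm A * norm (f x)" unfolding g_def using Cauchy_Schwarz_ineq2 by simp
      also have "\<dots> \<le> norm A * (norm (f x))\<^sup>2 + norm A"
      proof (cases "norm (f x) \<le> 1")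
        case True then show ?thesis
          by (metis add_increasing mult_left_le mult_nonneg_nonneg norm_ge_zero zero_le_power2)
      next
        case False
        then have "norm (f x) \<le> (norm (f x))\<^sup>2" unfolding power2_eq_square
          using mult_right_mono[of 1 "norm (f x)" "norm (f x)"] by simp
        then show ?thesis by (simp add: mult_left_mono add_increasing2)
      qed
      finally show "norm (g x) \<le> norm (norm A * (norm (f x))\<^sup>2 + norm A)" by simp
    qed
  qed
  have test0: "(LINT x|lebesgue_on Omega. phi a b n x * g x) = 0" for a b n
  proof -
    have "test_fun (\<lambda>x::real^('N \<times> 'p). phi a b n x *\<^sub>R A)" using As by (rule test_phi)
    then have "(LINT x|lebesgue_on Omega. Lop (\<lambda>x. phi a b n x *\<^sub>R A) x \<bullet> \<zeta> x)
        = (LINT x|lebesgue_on Omega. (phi a b n x *\<^sub>R A) \<bullet> f x)"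
      using L unfolding is_Ladj_def by blast
    then show ?thesis using Lop_zero[OF AU] by (simp add: g_def)
  qed
  have AEbox: "AE x in lebesgue_on (Omega :: (real^('N \<times> 'p)) set). x \<in> box 0 One"
  proof -
    have "cbox (0::real^('N \<times> 'p)) One - box 0 One \<in> null_sets lebesgue"
      using negligible_frontier_interval negligible_iff_null_sets by blast
    then have "AE x in lebesgue. x \<notin> cbox (0::real^('N \<times> 'p)) One - box 0 One" by (rule AE_not_in)
    then have "AE x in lebesgue. x \<in> (Omega :: (real^('N \<times> 'p)) set) \<longrightarrow> x \<in> box 0 One"
      by (rule eventually_mono) (auto simp: Omega_def)
    then show ?thesis using AE_restrict_space_iff[OF Om'] by simp
  qed
  have boxes: "(LINT x|lebesgue_on Omega. indicator (box a b) x * g x) = 0" for a b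
  proof -
    have "(\<lambda>n. LINT x|lebesgue_on Omega. phi a b n x * g x) \<longlonglongrightarrow> (LINT x|lebesgue_on Omega. indicator (box a b) x * g x)"
    proof (rule integral_dominated_convergence[where w="\<lambda>x. norm (g x)"])
      show "(\<lambda>x. indicator (box a b) x * g x) \<in> borel_measurable (lebesgue_on Omega)"
      proof (rule borel_measurable_times[OF _ gm])
        show "indicator (box a b) \<in> borel_measurable (lebesgue_on Omega)"
          by (intro measurable_restrict_space1 measurable_completion borel_measurable_indicator) simp
      qed
      show "(\<lambda>x. phi a b n x * g x) \<in> borel_measurable (lebesgue_on Omega)" for n
      proof (rule borel_measurable_times[OF _ gm])
        have "phi a b n \<in> borel_measurable borel" by (rule borel_measurable_continuous_onI[OF phi_cont])
        then show "phi a b n \<in> borel_measurable (lebesgue_on Omega)"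
          by (intro measurable_restrict_space1 measurable_completion) simp
      qed
      show "integrable (lebesgue_on Omega) (\<lambda>x. norm (g x))" using intg by simp
      show "AE x in lebesgue_on Omega. (\<lambda>n. phi a b n x * g x) \<longlonglongrightarrow> indicator (box a b) x * g x"
        using AEbox by eventually_elim (intro tendsto_mult phi_lim tendsto_const)
      show "AE x in lebesgue_on Omega. norm (phi a b n x * g x) \<le> norm (g x)" for n
        using phi_bounds[of a b n] by (intro AE_I2) (simp add: abs_mult mult_left_le_one_le)
    qed
    then have "(\<lambda>n. 0::real) \<longlonglongrightarrow> (LINT x|lebesgue_on Omega. indicator (box a b) x * g x)"
      using test0 by simp
    then show ?thesis using LIMSEQ_unique[OF tendsto_const] by metis
  qed
  define G where "G x = indicator Omega x * g x" for x
  have "AE x in lebesgue. G x = 0"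
  proof (rule box_zero_AE)
    show "integrable lebesgue G" using intg unfolding G_def integrable_restrict_space[OF Om'] by simp
    show "(LINT x|lebesgue. indicator (box a b) x * G x) = 0" for a b
      using boxes[of a b] unfolding G_def integral_restrict_space[OF Om'] by (simp add: mult_ac)
  qed
  then show ?thesis unfolding AE_restrict_space_iff[OF Om'] G_def g_def by eventually_elim auto
qed



lemma gersh:
  fixes B :: "real^'n::finite^'n"
  assumes K: "\<And>x y. \<bar>B$x$y\<bar> \<le> K" and ev: "B *v v = c *\<^sub>R v" and v0: "v \<noteq> 0"
  shows "c \<le> real CARD('n) * K"
proof -
  define m where "m = Max (range (\<lambda>x. \<bar>v$x\<bar>))"
  have "m \<in> range (\<lambda>x. \<bar>v$x\<bar>)" unfolding m_def by (intro Max_in) auto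
  then obtain a where a: "m = \<bar>v$a\<bar>" by auto
  have le0: "\<bar>v$x\<bar> \<le> m" for x unfolding m_def by (intro Max_ge) auto
  have le: "\<bar>v$x\<bar> \<le> \<bar>v$a\<bar>" for x using le0[of x] a by simp
  obtain x where "v$x \<noteq> 0" using v0 by (auto simp: vec_eq_iff)
  then have pos: "\<bar>v$a\<bar> > 0" using le[of x] by linarith
  have "c * v$a = (\<Sum>y\<in>UNIV. B$a$y * v$y)"
    using ev unfolding vec_eq_iff by (simp add: matrix_vector_mult_def)
  then have "\<bar>c\<bar> * \<bar>v$a\<bar> = \<bar>\<Sum>y\<in>UNIV. B$a$y * v$y\<bar>" by (simp add: abs_mult[symmetric])
  also have "\<dots> \<le> (\<Sum>y\<in>UNIV. \<bar>B$a$y * v$y\<bar>)" by (rule sum_abs)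
  also have "\<dots> = (\<Sum>y\<in>UNIV. \<bar>B$a$y\<bar> * \<bar>v$y\<bar>)" by (simp add: abs_mult)
  also have "\<dots> \<le> (\<Sum>y::'n\<in>UNIV. K * \<bar>v$a\<bar>)"
  proof (rule sum_mono)
    fix y :: 'n
    have K0: "0 \<le> K" using K[of a a] by linarith
    show "\<bar>B$a$y\<bar> * \<bar>v$y\<bar> \<le> K * \<bar>v$a\<bar>" by (rule mult_mono[OF K le K0]) simp
  qed
  also have "\<dots> = real CARD('n) * K * \<bar>v$a\<bar>" by simp
  finally have "\<bar>c\<bar> \<le> real CARD('n) * K" using pos by simp
  then show ?thesis by linarith
qed



definition Bst :: "('N::finite \<Rightarrow> real) \<Rightarrow> 'N \<times> 'N \<times> 'p::finite \<Rightarrow> 'N \<times> 'N \<times> 'p \<Rightarrow> real" where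
  "Bst d x y = (if fst (snd x) = fst (snd y) \<and> snd (snd x) = snd (snd y) then
      (if fst x = fst (snd x) then d (fst y) else if fst y = fst (snd y) then d (fst x) else 0) else 0)"

lemma sum_slice:
  fixes F :: "'a::finite \<times> 'b::finite \<times> 'c::finite \<Rightarrow> real"
  assumes "\<And>y1 y2 y3. (y2, y3) \<noteq> (j, l) \<Longrightarrow> F (y1, y2, y3) = 0"
  shows "(\<Sum>y\<in>UNIV. F y) = (\<Sum>y1\<in>UNIV. F (y1, j, l))"
proof -
  have "(\<Sum>y\<in>UNIV. F y) = (\<Sum>y\<in>(\<lambda>y1::'a. (y1, j, l)) ` UNIV. F y)"
  proof (rule sum.mono_neutral_right)
    show "\<forall>y\<in>UNIV - (\<lambda>y1::'a. (y1, j, l)) ` UNIV. F y = 0"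
    proof
      fix y assume y: "y \<in> UNIV - (\<lambda>y1::'a. (y1, j, l)) ` UNIV"
      obtain y1 y2 y3 where yy: "y = (y1, y2, y3)" by (cases y) auto
      have "(y2, y3) \<noteq> (j, l)" using y yy by auto
      then show "F y = 0" using assms yy by simp
    qed
  qed auto
  also have "\<dots> = (\<Sum>y1\<in>UNIV. F (y1, j, l))"
    by (subst sum.reindex) (auto simp: inj_on_def)
  finally show ?thesis .
qed

lemma neg_mv: "(- (B :: real^'n::finite^'m::finite)) *v v = - (B *v v)"
  by (simp add: matrix_vector_mult_def vec_eq_iff sum_negf[symmetric] vector_uminus_component)

lemma eig_block:
  fixes B :: "real^('N::finite \<times> 'N \<times> 'p::finite)^('N \<times> 'N \<times> 'p)"
  assumes Bs: "\<And>x y. B$x$y = Bst d x y" and eig: "eigenvalues_le (-B) k" and ij: "i \<noteq> j"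
  shows "- k \<le> (d j - sqrt ((d j)\<^sup>2 + 4 * (\<Sum>i\<in>UNIV - {j}. (d i)\<^sup>2))) / 2"
proof -
  define S where "S = (\<Sum>i\<in>UNIV - {j}. (d i)\<^sup>2)"
  define a where "a = d j"
  define r where "r = sqrt (a\<^sup>2 + 4 * S)"
  define lam where "lam = (a - r) / 2"
  define l :: 'p where "l = undefined"
  have S0: "0 \<le> S" unfolding S_def by (intro sum_nonneg) auto
  have r2: "r\<^sup>2 = a\<^sup>2 + 4 * S" unfolding r_def using S0 by simp
  have quad: "lam * lam = a * lam + S" unfolding lam_def using r2 by (simp add: power2_eq_square field_simps)
  define v :: "real^('N \<times> 'N \<times> 'p)" where
    "v = (\<chi> y. if fst (snd y) = j \<and> snd (snd y) = l then (if fst y = j then lam else d (fst y)) else 0)"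
  have Bv: "B *v v = lam *\<^sub>R v"
  proof (subst vec_eq_iff, intro allI)
    fix x :: "'N \<times> 'N \<times> 'p"
    obtain x1 x2 x3 where x: "x = (x1, x2, x3)" by (cases x) auto
    have "(B *v v) $ x = (\<Sum>y\<in>UNIV. Bst d x y * v $ y)" by (simp add: matrix_vector_mult_def Bs)
    also have "\<dots> = lam * v $ x"
    proof (cases "x2 = j \<and> x3 = l")
      case False
      then have "(\<Sum>y\<in>UNIV. Bst d x y * v $ y) = 0"
        by (intro sum.neutral) (auto simp: Bst_def v_def x)
      then show ?thesis using False by (auto simp: v_def x)
    next
      case True
      have "(\<Sum>y\<in>UNIV. Bst d x y * v $ y) = (\<Sum>y1\<in>UNIV. Bst d x (y1, j, l) * v $ (y1, j, l))"
        by (rule sum_slice) (auto simp: v_def)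
      also have "\<dots> = lam * v $ x"
      proof (cases "x1 = j")
        case True
        have "(\<Sum>y1\<in>UNIV. Bst d x (y1, j, l) * v $ (y1, j, l)) = (\<Sum>y1\<in>UNIV. d y1 * (if y1 = j then lam else d y1))"
          using \<open>x2 = j \<and> x3 = l\<close> True by (intro sum.cong) (auto simp: Bst_def v_def x)
        also have "\<dots> = d j * lam + (\<Sum>y1\<in>UNIV - {j}. d y1 * (if y1 = j then lam else d y1))"
          by (subst sum.remove[of UNIV j]) auto
        also have "(\<Sum>y1\<in>UNIV - {j}. d y1 * (if y1 = j then lam else d y1)) = S"
          unfolding S_def by (intro sum.cong) (auto simp: power2_eq_square)
        finally show ?thesis using quad True \<open>x2 = j \<and> x3 = l\<close> by (simp add: v_def x a_def)
      next
        case False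
        have "(\<Sum>y1\<in>UNIV. Bst d x (y1, j, l) * v $ (y1, j, l)) = (\<Sum>y1\<in>UNIV. if y1 = j then d x1 * lam else 0)"
          using \<open>x2 = j \<and> x3 = l\<close> False by (intro sum.cong) (auto simp: Bst_def v_def x)
        also have "\<dots> = d x1 * lam" by simp
        finally show ?thesis using False \<open>x2 = j \<and> x3 = l\<close> by (simp add: v_def x)
      qed
      finally show ?thesis .
    qed
    finally show "(B *v v) $ x = (lam *\<^sub>R v) $ x" by simp
  qed
  show ?thesis
  proof (cases "v = 0")
    case False
    have "(- B) *v v = (- lam) *\<^sub>R v" using Bv by (simp add: neg_mv)
    then have "- lam \<le> k" using eig False unfolding eigenvalues_le_def by blast
    then show ?thesis unfolding lam_def r_def a_def S_def by linarith
  next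
    case True
    have "v $ (j, j, l) = 0" "v $ (i, j, l) = 0" using True by simp_all
    then have lam0: "lam = 0" and di: "d i = 0" using ij unfolding v_def by simp_all
    define e :: "real^('N \<times> 'N \<times> 'p)" where "e = axis (i, j, l) 1"
    have e0: "e \<noteq> 0" unfolding e_def by (simp add: axis_eq_0_iff)
    have "B *v e = 0"
    proof (subst vec_eq_iff, intro allI)
      fix x :: "'N \<times> 'N \<times> 'p"
      have "(B *v e) $ x = (\<Sum>y\<in>UNIV. Bst d x y * (if y = (i, j, l) then 1 else 0))"
        by (simp add: matrix_vector_mult_def Bs e_def axis_def)
      also have "\<dots> = Bst d x (i, j, l)" by (simp add: if_distrib[of "\<lambda>t. _ * t"] cong: if_cong)
      also have "\<dots> = 0" using di ij by (auto simp: Bst_def)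
      finally show "(B *v e) $ x = 0 $ x" by simp
    qed
    then have "(- B) *v e = 0 *\<^sub>R e" by (simp add: neg_mv)
    then have "0 \<le> k" using eig e0 unfolding eigenvalues_le_def by blast
    then show ?thesis using lam0 unfolding lam_def r_def a_def S_def by simp
  qed
qed


lemma exists_other:
  assumes "CARD('N::finite) > 1"
  shows "\<exists>j::'N. j \<noteq> i"
proof (rule ccontr)
  assume "\<not> (\<exists>j::'N. j \<noteq> i)"
  then have "(UNIV :: 'N set) = {i}" by auto
  then have "card (UNIV :: 'N set) = card {i}" by (rule arg_cong)
  then have "CARD('N) = 1" by simp
  then show False using assms by simp
qed

lemma d_bound:
  fixes d :: "'N::finite \<Rightarrow> real"
  assumes N: "CARD('N) > 1"
    and H: "\<And>j. - k \<le> (d j - sqrt ((d j)\<^sup>2 + 4 * (\<Sum>i\<in>UNIV - {j}. (d i)\<^sup>2))) / 2"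
  shows "0 \<le> k" "\<And>i. \<bar>d i\<bar> \<le> 2 * k"
proof -
  define S where "S j = (\<Sum>i\<in>UNIV - {j}. (d i)\<^sup>2)" for j
  have S0: "0 \<le> S j" for j unfolding S_def by (intro sum_nonneg) auto
  have rge: "\<bar>d j\<bar> \<le> sqrt ((d j)\<^sup>2 + 4 * S j)" for j
  proof -
    have "sqrt ((d j)\<^sup>2) \<le> sqrt ((d j)\<^sup>2 + 4 * S j)" by (rule real_sqrt_le_mono) (use S0[of j] in simp)
    then show ?thesis by simp
  qed
  have H': "sqrt ((d j)\<^sup>2 + 4 * S j) \<le> d j + 2 * k" for j using H[of j] unfolding S_def by (simp add: field_simps)
  show k0: "0 \<le> k" using H'[of undefined] rge[of undefined] by linarith
  have Sb: "S j \<le> k * d j + k\<^sup>2" for j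
  proof -
    have r0: "0 \<le> sqrt ((d j)\<^sup>2 + 4 * S j)" using S0[of j] by simp
    have "(sqrt ((d j)\<^sup>2 + 4 * S j))\<^sup>2 \<le> (d j + 2 * k)\<^sup>2"
      by (rule power_mono[OF H'[of j] r0])
    moreover have "0 \<le> (d j)\<^sup>2 + 4 * S j" using S0[of j] by simp
    then have "(sqrt ((d j)\<^sup>2 + 4 * S j))\<^sup>2 = (d j)\<^sup>2 + 4 * S j" by (rule real_sqrt_pow2)
    ultimately show ?thesis by (simp add: power2_eq_square algebra_simps)
  qed
  have pair: "(d i)\<^sup>2 \<le> k * d j + k\<^sup>2" if "i \<noteq> j" for i j
  proof -
    have "(d i)\<^sup>2 \<le> S j" unfolding S_def using that by (intro member_le_sum) auto
    then show ?thesis using Sb[of j] by linarith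
  qed
  define M where "M = Max (range (\<lambda>i. \<bar>d i\<bar>))"
  have Mge: "\<bar>d i\<bar> \<le> M" for i unfolding M_def by (intro Max_ge) auto
  have "M \<in> range (\<lambda>i. \<bar>d i\<bar>)" unfolding M_def by (intro Max_in) auto
  then obtain i0 where i0: "M = \<bar>d i0\<bar>" by auto
  obtain j0 where j0: "j0 \<noteq> i0" using exists_other[OF N] by blast
  have "M\<^sup>2 \<le> k * d j0 + k\<^sup>2" using pair[OF j0[symmetric]] i0 by simp
  also have "\<dots> \<le> k * M + k\<^sup>2" using Mge[of j0] k0 by (simp add: mult_left_mono)
  finally have MM: "M\<^sup>2 \<le> k * M + k\<^sup>2" .
  have M2: "M \<le> 2 * k"
  proof (rule ccontr)
    assume "\<not> M \<le> 2 * k"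
    then have "M > 2 * k" by simp
    then have "M * M > 2 * k * M" using k0 by (simp add: mult_strict_right_mono)
    moreover have "2 * k * M \<ge> k * M + k * k"
    proof -
      have "k * k \<le> k * M" using \<open>M > 2 * k\<close> k0 by (intro mult_left_mono) auto
      moreover have "2 * k * M = k * M + k * M" by simp
      ultimately show ?thesis by linarith
    qed
    moreover have "M * M \<le> k * M + k * k" using MM by (simp add: power2_eq_square)
    ultimately show False by linarith
  qed
  show "\<bar>d i\<bar> \<le> 2 * k" for i using Mge[of i] M2 by linarith
qed

lemma struct_final:
  fixes B :: "real^('N::finite \<times> 'N \<times> 'p::finite)^('N \<times> 'N \<times> 'p)"
  assumes N: "CARD('N) > 1" and Bs: "\<And>x y. B$x$y = Bst d x y" and eig: "eigenvalues_le (-B) k"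
  shows "eigenvalues_le B (2 * k * real CARD('N \<times> 'N \<times> 'p))"
proof -
  have H: "- k \<le> (d j - sqrt ((d j)\<^sup>2 + 4 * (\<Sum>i\<in>UNIV - {j}. (d i)\<^sup>2))) / 2" for j
  proof -
    obtain i where "i \<noteq> j" using exists_other[OF N] by blast
    then show ?thesis using eig_block[OF Bs eig] by blast
  qed
  have k0: "0 \<le> k" and db: "\<And>i. \<bar>d i\<bar> \<le> 2 * k" using d_bound[OF N H] by auto
  have K: "\<bar>B$x$y\<bar> \<le> 2 * k" for x y unfolding Bs Bst_def using db k0 by auto
  show ?thesis unfolding eigenvalues_le_def
  proof (intro allI impI)
    fix c v assume "v \<noteq> 0 \<and> B *v v = c *\<^sub>R v"
    then have "c \<le> real CARD('N \<times> 'N \<times> 'p) * (2 * k)" using gersh[OF K] by blast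
    then show "c \<le> 2 * k * real CARD('N \<times> 'N \<times> 'p)" by (simp add: mult_ac)
  qed
qed


definition Em :: "'n::finite \<Rightarrow> 'n \<Rightarrow> real^'n^'n" where
  "Em a b = (\<chi> x y. if x = a \<and> y = b then 1 else 0)"

lemma sum_if_eq_conj: "finite S \<Longrightarrow> (\<Sum>x\<in>S. if x = c \<and> P x then v x else 0) = (if c \<in> S \<and> P c then v c else 0)"
proof -
  assume S: "finite S"
  have "(\<Sum>x\<in>S. if x = c \<and> P x then v x else 0) = (\<Sum>x\<in>S. if x = c then (if P c then v c else 0) else 0)"
    by (intro sum.cong) auto
  also have "\<dots> = (if c \<in> S \<and> P c then v c else 0)" using S by simp
  finally show ?thesis .
qed

lemma sum_if_const_conj: "(\<Sum>x\<in>S. if Q \<and> R x then v x else 0) = (if Q then (\<Sum>x\<in>S. if R x then v x else 0) else 0)"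
  by auto

lemma Uop_Ediag: "Uop (Em (k,k,l) (k,k,l) :: real^('N::finite\<times>'N\<times>'p::finite)^('N\<times>'N\<times>'p)) $ m = (if m = k then 1/2 else 0)"
  unfolding Uop_def Em_def by (auto simp: sum_if_eq_conj)

lemma Uop_Eoff: "i \<noteq> j \<Longrightarrow> Uop (Em (j,j,l) (i,j,l) + Em (i,j,l) (j,j,l) :: real^('N::finite\<times>'N\<times>'p::finite)^('N\<times>'N\<times>'p)) $ m = (if m = i then 1 else 0)"
  unfolding Uop_def Em_def by (auto simp: sum_if_eq_conj sum_if_const_conj sum.distrib)

lemma Uop_F1: "(x2,x3) \<noteq> (y2,y3) \<Longrightarrow> Uop (Em (x1,x2,x3) (y1,y2,y3) + Em (y1,y2,y3) (x1,x2,x3) :: real^('N::finite\<times>'N\<times>'p::finite)^('N\<times>'N\<times>'p)) $ m = 0"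
  unfolding Uop_def Em_def by (auto simp: sum_if_eq_conj sum_if_const_conj sum.distrib)

lemma Uop_F2: "i \<noteq> j \<Longrightarrow> i' \<noteq> j \<Longrightarrow> Uop (Em (i,j,l) (i',j,l) + Em (i',j,l) (i,j,l) :: real^('N::finite\<times>'N\<times>'p::finite)^('N\<times>'N\<times>'p)) $ m = 0"
  unfolding Uop_def Em_def by (auto simp: sum_if_eq_conj sum_if_const_conj sum.distrib)


lemma Uop_add: "Uop (A + B) = Uop A + Uop B"
  unfolding Uop_def by (simp add: vec_eq_iff sum.distrib algebra_simps)

lemma Uop_diff: "Uop (A - B) = Uop A - Uop B"
  unfolding Uop_def by (simp add: vec_eq_iff sum_subtractf algebra_simps)

lemma Em_inner: "Em a b \<bullet> B = B$a$b"
  unfolding Em_def inner_vec_def by (simp add: if_distrib[of "\<lambda>t. t * _"] sum_if_eq_conj sum_if_const_conj cong: if_cong)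

lemma symD: "symmetric_mat B \<Longrightarrow> B$y$x = B$x$y"
  unfolding symmetric_mat_def transpose_def by (metis vec_lambda_beta)

lemma Em_transpose: "transpose (Em a b) = Em b a"
  unfolding transpose_def Em_def by (simp add: vec_eq_iff conj_commute)
lemma tr_add: "transpose (A + B) = transpose A + (transpose B :: real^'n::finite^'m::finite)"
  by (simp add: transpose_def vec_eq_iff)
lemma tr_diff: "transpose (A - B) = transpose A - (transpose B :: real^'n::finite^'m::finite)"
  by (simp add: transpose_def vec_eq_iff)
lemma sym_pair: "symmetric_mat (Em a b + Em b a)"
  unfolding symmetric_mat_def by (simp add: tr_add Em_transpose add.commute)
lemma sym_T2: "symmetric_mat (2 *\<^sub>R Em a a - (Em b c + Em c b))"
  unfolding symmetric_mat_def by (simp add: tr_add tr_diff transpose_scalar Em_transpose add.commute)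
lemma sym_T3: "symmetric_mat (Em a a - Em b b)"
  unfolding symmetric_mat_def by (simp add: tr_diff Em_transpose)

lemma Uop_T2: "i \<noteq> j \<Longrightarrow> Uop (2 *\<^sub>R Em (i,i,l) (i,i,l) - (Em (j,j,l) (i,j,l) + Em (i,j,l) (j,j,l))
     :: real^('N::finite\<times>'N\<times>'p::finite)^('N\<times>'N\<times>'p)) = 0"
  by (simp add: Uop_diff Uop_scale vec_eq_iff Uop_Ediag Uop_Eoff)

lemma Uop_T3: "Uop (Em (i,i,l) (i,i,l) - Em (i,i,l') (i,i,l')
     :: real^('N::finite\<times>'N\<times>'p::finite)^('N\<times>'N\<times>'p)) = 0"
  by (simp add: Uop_diff vec_eq_iff Uop_Ediag)

lemma struct_pointwise:
  fixes B :: "real^('N::finite \<times> 'N \<times> 'p::finite)^('N \<times> 'N \<times> 'p)"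
  assumes sym: "symmetric_mat B"
    and O1: "\<And>x y. snd x \<noteq> snd y \<Longrightarrow> (Em x y + Em y x) \<bullet> B = 0"
    and O2: "\<And>i i' j l. i \<noteq> j \<Longrightarrow> i' \<noteq> j \<Longrightarrow> (Em (i,j,l) (i',j,l) + Em (i',j,l) (i,j,l)) \<bullet> B = 0"
    and O3: "\<And>i j l. i \<noteq> j \<Longrightarrow> (2 *\<^sub>R Em (i,i,l) (i,i,l) - (Em (j,j,l) (i,j,l) + Em (i,j,l) (j,j,l))) \<bullet> B = 0"
    and O4: "\<And>i l l'. (Em (i,i,l) (i,i,l) - Em (i,i,l') (i,i,l')) \<bullet> B = 0"
  shows "B$x$y = Bst (\<lambda>i. B$(i,i,undefined)$(i,i,undefined)) x y"
proof -
  define d where "d i = B$(i,i,undefined)$(i,i,undefined)" for i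
  have P1: "B$x$y = 0" if "snd x \<noteq> snd y" for x y
    using O1[OF that] symD[OF sym, of x y] by (simp add: inner_add_left Em_inner)
  have P2: "B$(i,j,l)$(i',j,l) = 0" if "i \<noteq> j" "i' \<noteq> j" for i i' j l
    using O2[OF that, of l] symD[OF sym, of "(i,j,l)" "(i',j,l)"] by (simp add: inner_add_left Em_inner)
  have P4: "B$(i,i,l)$(i,i,l) = d i" for i l
    using O4[of i l undefined] unfolding d_def by (simp add: inner_diff_left Em_inner)
  have P3: "B$(j,j,l)$(i,j,l) = d i" if "i \<noteq> j" for i j l
    using O3[OF that, of l] symD[OF sym, of "(j,j,l)" "(i,j,l)"] P4[of i l]
    by (simp add: inner_diff_left inner_add_left Em_inner)
  obtain x1 x2 x3 where x: "x = (x1, x2, x3)" by (cases x) auto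
  obtain y1 y2 y3 where y: "y = (y1, y2, y3)" by (cases y) auto
  show ?thesis
  proof (cases "x2 = y2 \<and> x3 = y3")
    case False
    then show ?thesis using P1[of x y] unfolding Bst_def x y by auto
  next
    case True
    then have xy: "x = (x1, y2, y3)" using x by simp
    show ?thesis
    proof (cases "x1 = y2")
      case True
      show ?thesis
      proof (cases "y1 = y2")
        case True then show ?thesis using \<open>x1 = y2\<close> P4 unfolding Bst_def xy y d_def by simp
      next
        case False then show ?thesis using \<open>x1 = y2\<close> P3[OF False] unfolding Bst_def xy y d_def by simp
      qed
    next
      case False
      show ?thesis
      proof (cases "y1 = y2")
        case True then show ?thesis using False P3[OF False, of y3] symD[OF sym, of "(y2,y2,y3)" "(x1,y2,y3)"]
          unfolding Bst_def xy y d_def by simp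
      next
        case False2: False
        then show ?thesis using False P2[OF False False2] unfolding Bst_def xy y d_def by simp
      qed
    qed
  qed
qed



lemma Uop_pair0:
  assumes "snd x \<noteq> snd y"
  shows "Uop (Em x y + Em y x :: real^('N::finite\<times>'N\<times>'p::finite)^('N\<times>'N\<times>'p)) = 0"
proof -
  obtain x1 x2 x3 where x: "x = (x1, x2, x3)" by (cases x) auto
  obtain y1 y2 y3 where y: "y = (y1, y2, y3)" by (cases y) auto
  show ?thesis using assms Uop_F1[of x2 x3 y2 y3 x1 y1] unfolding x y by (simp add: vec_eq_iff)
qed

theorem lemma2p10:
  assumes "CARD('N::finite) > 1"
  shows "\<exists>C :: real \<Rightarrow> real. \<forall>k (\<zeta> :: real^('N \<times> 'p::finite) \<Rightarrow> real^('N \<times> 'N \<times> 'p)) f.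
           is_Ladj \<zeta> f \<and> (AE x in lebesgue_on Omega. eigenvalues_le (- f x) k)
           \<longrightarrow> (AE x in lebesgue_on Omega. eigenvalues_le (f x) (C k))"
proof (intro exI[of _ "\<lambda>k. 2 * k * real CARD('N \<times> 'N \<times> 'p)"] allI impI)
  fix k :: real and \<zeta> :: "real^('N \<times> 'p) \<Rightarrow> real^('N \<times> 'N \<times> 'p)"
    and f :: "real^('N \<times> 'p) \<Rightarrow> real^('N \<times> 'N \<times> 'p)^('N \<times> 'N \<times> 'p)"
  assume H: "is_Ladj \<zeta> f \<and> (AE x in lebesgue_on Omega. eigenvalues_le (- f x) k)"
  then have L: "is_Ladj \<zeta> f" and E: "AE x in lebesgue_on Omega. eigenvalues_le (- f x) k" by auto
  have Sy: "AE x in lebesgue_on Omega. symmetric_mat (f x)" using L unfolding is_Ladj_def by auto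
  have A1: "AE x in lebesgue_on Omega. \<forall>xa ya. snd xa \<noteq> snd ya \<longrightarrow> (Em xa ya + Em ya xa) \<bullet> f x = 0"
    unfolding AE_all_countable
  proof (intro allI)
    fix xa ya :: "'N \<times> 'N \<times> 'p"
    show "AE x in lebesgue_on Omega. snd xa \<noteq> snd ya \<longrightarrow> (Em xa ya + Em ya xa) \<bullet> f x = 0"
    proof (cases "snd xa \<noteq> snd ya")
      case True
      then show ?thesis using orth_AE[OF L sym_pair Uop_pair0[OF True]] by simp
    qed simp
  qed
  have A2: "AE x in lebesgue_on Omega. \<forall>i i' j l. i \<noteq> j \<longrightarrow> i' \<noteq> j \<longrightarrow>
      (Em (i,j,l) (i',j,l) + Em (i',j,l) (i,j,l)) \<bullet> f x = 0"
    unfolding AE_all_countable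
  proof (intro allI)
    fix i i' j :: 'N and l :: 'p
    show "AE x in lebesgue_on Omega. i \<noteq> j \<longrightarrow> i' \<noteq> j \<longrightarrow> (Em (i,j,l) (i',j,l) + Em (i',j,l) (i,j,l)) \<bullet> f x = 0"
    proof (cases "i \<noteq> j \<and> i' \<noteq> j")
      case True
      then have "Uop (Em (i,j,l) (i',j,l) + Em (i',j,l) (i,j,l) :: real^('N\<times>'N\<times>'p)^('N\<times>'N\<times>'p)) = 0"
        using Uop_F2[of i j i' l] by (simp add: vec_eq_iff)
      then show ?thesis using orth_AE[OF L sym_pair] by simp
    qed auto
  qed
  have A3: "AE x in lebesgue_on Omega. \<forall>i j l. i \<noteq> j \<longrightarrow>
      (2 *\<^sub>R Em (i,i,l) (i,i,l) - (Em (j,j,l) (i,j,l) + Em (i,j,l) (j,j,l))) \<bullet> f x = 0"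
    unfolding AE_all_countable
  proof (intro allI)
    fix i j :: 'N and l :: 'p
    show "AE x in lebesgue_on Omega. i \<noteq> j \<longrightarrow>
      (2 *\<^sub>R Em (i,i,l) (i,i,l) - (Em (j,j,l) (i,j,l) + Em (i,j,l) (j,j,l))) \<bullet> f x = 0"
    proof (cases "i \<noteq> j")
      case True
      then show ?thesis using orth_AE[OF L sym_T2 Uop_T2[OF True]] by simp
    qed auto
  qed
  have A4: "AE x in lebesgue_on Omega. \<forall>i l l'.
      (Em (i,i,l) (i,i,l) - Em (i,i,l') (i,i,l')) \<bullet> f x = 0"
    unfolding AE_all_countable
  proof (intro allI)
    fix i :: 'N and l l' :: 'p
    show "AE x in lebesgue_on Omega. (Em (i,i,l) (i,i,l) - Em (i,i,l') (i,i,l')) \<bullet> f x = 0"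
      using orth_AE[OF L sym_T3 Uop_T3] by simp
  qed
  show "AE x in lebesgue_on Omega. eigenvalues_le (f x) (2 * k * real CARD('N \<times> 'N \<times> 'p))"
    using Sy A1 A2 A3 A4 E
  proof eventually_elim
    case (elim x)
    have "f x $ a $ b = Bst (\<lambda>i. f x $ (i,i,undefined) $ (i,i,undefined)) a b" for a b
      by (rule struct_pointwise) (use elim in auto)
    then show ?case by (rule struct_final[OF assms _ elim(6)])
  qed
qed

end
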